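(* Let $D\subset\mathbb{C}^n$ be a hyperconvex domain, $\mathscr{P}=\big(\{\mathbf{z}_i\}_{i=1}^p,\{\mathbf{f}_{0,i}\}_{i=1}^p,\{u_{0,i}\}_{i=1}^p\big)$ a priori data on $D$, and $\Phi^D_{\mathscr{P},\max}$ a global Zhou weight related to $\mathscr{P}$ on $D$. Then for every $z\in D$, $$\Phi^D_{\mathscr{P},\max}(z)=\sup\big\{\phi(z):\phi\in\mathrm{PSH}^-(D),\ (\mathbf{f}_{0,i},\mathbf{z}_i)\notin\mathcal{I}(u_{0,i}+\phi)_{\mathbf{z}_i}\text{ and }\phi\ge\Phi^D_{\mathscr{P},\max}+O(1)\text{ near }\mathbf{z}_i,\ \forall i=1,\dots,p\big\}.$$
   Context: $\mathrm{PSH}^-(D)$: negative plurisubharmonic functions on $D$. Hyperconvex: admits a continuous plurisubharmonic exhaustion $\varrho:D\to(-\infty,0)$. $\mathcal{I}(u)_z=\{(f,z)\in\mathcal O_z:|f|^2e^{-2u}\text{ integrable near }z\}$; for a holomorphic vector $\mathbf f$, $|\mathbf f|^2=\sum_j|f_j|^2$ and $(\mathbf f,z)\notin\mathcal{I}(u)_z$ means $|\mathbf f|^2e^{-2u}$ is not integrable near $z$. A priori data $\mathscr{P}$: distinct $\mathbf{z}_1,\dots,\mathbf{z}_p\in D$, holomorphic vectors $\mathbf{f}_{0,i}$ near $\mathbf{z}_i$, plurisubharmonic $u_{0,i}$ near $\mathbf{z}_i$ with $|\mathbf{f}_{0,i}|^2e^{-2u_{0,i}}$ integrable near $\mathbf{z}_i$.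 Global Zhou weight related to $\mathscr{P}$ on $D$: $\Phi\in\mathrm{PSH}^-(D)$ such that (1) for large $N_i$, $|\mathbf{f}_{0,i}|^2e^{-2u_{0,i}}|z-\mathbf{z}_i|^{2N_i}e^{-2\Phi}$ is integrable near $\mathbf{z}_i$ for all $i$; (2) $|\mathbf{f}_{0,i}|^2e^{-2u_{0,i}-2\Phi}$ is not integrable near $\mathbf{z}_i$ for all $i$; (3) any $\Psi\in\mathrm{PSH}^-(D)$ with $\Psi\ge\Phi$ and $|\mathbf{f}_{0,i}|^2e^{-2u_{0,i}-2\Psi}$ non-integrable near every $\mathbf{z}_i$ equals $\Phi$ on $D$. *)

theory Defs
  imports "HOL-Analysis.Analysis"
begin

text \<open>Points of C^n are modelled as vectors of type complex ^ 'n (n = CARD('n)).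
  Plurisubharmonic functions take values in the extended reals (value -\<infinity> allowed).\<close>

definition eexp :: "ereal \<Rightarrow> ennreal" where
  "eexp x = (case x of ereal r \<Rightarrow> ennreal (exp r) | PInfty \<Rightarrow> \<infinity> | MInfty \<Rightarrow> 0)"

definition circle_integral :: "(real \<Rightarrow> ereal) \<Rightarrow> ereal" where
  "circle_integral g =
     enn2ereal (\<integral>\<^sup>+ t. e2ennreal (g t) * indicator {0..2*pi} t \<partial>lborel)
   - enn2ereal (\<integral>\<^sup>+ t. e2ennreal (- g t) * indicator {0..2*pi} t \<partial>lborel)"

definition usc_on :: "(complex ^ 'n) set \<Rightarrow> (complex ^ 'n \<Rightarrow> ereal) \<Rightarrow> bool" where
  "usc_on U u \<longleftrightarrow> (\<forall>x\<in>U. \<forall>c. u x < c \<longrightarrow>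
      (\<exists>e>0. \<forall>y\<in>U. dist y x < e \<longrightarrow> u y < c))"

definition psh :: "(complex ^ 'n) set \<Rightarrow> (complex ^ 'n \<Rightarrow> ereal) \<Rightarrow> bool" where
  "psh U u \<longleftrightarrow> open U \<and> usc_on U u \<and> (\<forall>x\<in>U. u x < \<infinity>) \<and>
     (\<forall>a b. (\<forall>\<zeta>. cmod \<zeta> \<le> 1 \<longrightarrow> a + \<zeta> *s b \<in> U) \<longrightarrow>
        u a \<le> ereal (1 / (2*pi)) * circle_integral (\<lambda>t. u (a + cis t *s b))) \<and>
     (\<forall>x\<in>U. \<exists>y\<in>connected_component_set U x. u y \<noteq> -\<infinity>)"

definition psh_neg :: "(complex ^ 'n) set \<Rightarrow> (complex ^ 'n \<Rightarrow> ereal) \<Rightarrow> bool" where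
  "psh_neg D u \<longleftrightarrow> psh D u \<and> (\<forall>x\<in>D. u x < 0)"

definition domain :: "(complex ^ 'n) set \<Rightarrow> bool" where
  "domain D \<longleftrightarrow> open D \<and> connected D \<and> D \<noteq> {}"

definition hyperconvex :: "(complex ^ 'n) set \<Rightarrow> bool" where
  "hyperconvex D \<longleftrightarrow> domain D \<and> (\<exists>\<rho> :: complex ^ 'n \<Rightarrow> real.
      continuous_on D \<rho> \<and> psh D (\<lambda>z. ereal (\<rho> z)) \<and> (\<forall>z\<in>D. \<rho> z < 0) \<and>
      (\<forall>c<0. compact (closure {z\<in>D. \<rho> z < c}) \<and> closure {z\<in>D. \<rho> z < c} \<subseteq> D))"

definition holo :: "(complex ^ 'n) set \<Rightarrow> (complex ^ 'n \<Rightarrow> complex) \<Rightarrow> bool" where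
  "holo U f \<longleftrightarrow> open U \<and> (\<forall>x\<in>U. \<exists>f'. (f has_derivative f') (at x) \<and>
      (\<forall>c v. f' (c *s v) = c * f' v))"

definition loc_int :: "complex ^ 'n \<Rightarrow> (complex ^ 'n \<Rightarrow> ennreal) \<Rightarrow> bool" where
  "loc_int z g \<longleftrightarrow> (\<exists>r>0. (\<integral>\<^sup>+ w. g w * indicator (ball z r) w \<partial>lborel) < \<infinity>)"

definition sqnorm :: "nat \<Rightarrow> (nat \<Rightarrow> complex ^ 'n \<Rightarrow> complex) \<Rightarrow> complex ^ 'n \<Rightarrow> real" where
  "sqnorm m f w = (\<Sum>j<m. (cmod (f j w))\<^sup>2)"

definition apriori_data :: "(complex ^ 'n) set \<Rightarrow> nat \<Rightarrow> (nat \<Rightarrow> complex ^ 'n) \<Rightarrow>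
    (nat \<Rightarrow> nat) \<Rightarrow> (nat \<Rightarrow> nat \<Rightarrow> complex ^ 'n \<Rightarrow> complex) \<Rightarrow>
    (nat \<Rightarrow> complex ^ 'n \<Rightarrow> ereal) \<Rightarrow> (nat \<Rightarrow> (complex ^ 'n) set) \<Rightarrow> bool" where
  "apriori_data D p z m f u U \<longleftrightarrow> 0 < p \<and> inj_on z {..<p} \<and>
     (\<forall>i<p. z i \<in> D \<and> open (U i) \<and> z i \<in> U i \<and> (\<forall>j<m i. holo (U i) (f i j)) \<and>
        psh (U i) (u i) \<and>
        loc_int (z i) (\<lambda>w. ennreal (sqnorm (m i) (f i) w) * eexp (- 2 * u i w)))"

definition global_zhou_weight :: "(complex ^ 'n) set \<Rightarrow> nat \<Rightarrow> (nat \<Rightarrow> complex ^ 'n) \<Rightarrow>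
    (nat \<Rightarrow> nat) \<Rightarrow> (nat \<Rightarrow> nat \<Rightarrow> complex ^ 'n \<Rightarrow> complex) \<Rightarrow>
    (nat \<Rightarrow> complex ^ 'n \<Rightarrow> ereal) \<Rightarrow> (complex ^ 'n \<Rightarrow> ereal) \<Rightarrow> bool" where
  "global_zhou_weight D p z m f u \<Phi> \<longleftrightarrow> psh_neg D \<Phi> \<and>
     (\<forall>i<p. \<exists>N0::nat. \<forall>N\<ge>N0. loc_int (z i) (\<lambda>w. ennreal (sqnorm (m i) (f i) w)
          * eexp (- 2 * u i w) * ennreal (norm (w - z i) ^ (2 * N)) * eexp (- 2 * \<Phi> w))) \<and>
     (\<forall>i<p. \<not> loc_int (z i) (\<lambda>w. ennreal (sqnorm (m i) (f i) w) * eexp (- 2 * (u i w + \<Phi> w)))) \<and>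
     (\<forall>\<Psi>. psh_neg D \<Psi> \<and> (\<forall>w\<in>D. \<Psi> w \<ge> \<Phi> w) \<and>
        (\<forall>i<p. \<not> loc_int (z i) (\<lambda>w. ennreal (sqnorm (m i) (f i) w) * eexp (- 2 * (u i w + \<Psi> w))))
        \<longrightarrow> (\<forall>w\<in>D. \<Psi> w = \<Phi> w))"

end

theory Submission
  imports Defs
begin

lemma nn_cmult_le:
  fixes c :: ennreal
  assumes c: "c \<noteq> \<infinity>"
  shows "(\<integral>\<^sup>+ x. c * f x \<partial>M) \<le> c * (\<integral>\<^sup>+ x. f x \<partial>M)"
proof (cases "c = 0")
  case True thus ?thesis by simp
next
  case False
  show ?thesis
    unfolding nn_integral_def
  proof (rule SUP_least)
    fix g assume g: "g \<in> {g. simple_function M g \<and> g \<le> (\<lambda>x. c * f x)}"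
    define h where "h = (\<lambda>x. g x / c)"
    have cc: "c / c = 1" using False c by (simp add: ennreal_divide_self top.not_eq_extremum)
    have gh: "g = (\<lambda>x. c * h x)"
    proof
      fix x show "g x = c * h x" unfolding h_def
        by (simp add: ennreal_times_divide[symmetric] mult.commute[of c] ennreal_divide_times cc)
    qed
    have hs: "simple_function M h" unfolding h_def using g by (auto intro: simple_function_compose1[where g="\<lambda>y. y / c"])
    have hf: "h \<le> f" unfolding h_def le_fun_def
    proof
      fix x have "g x \<le> c * f x" using g by (auto simp: le_fun_def)
      hence "g x / c \<le> (f x * c) / c" by (simp add: divide_right_mono_ennreal mult.commute)
      also have "\<dots> = f x" using False c by (simp add: ennreal_mult_divide_eq)
      finally show "g x / c \<le> f x" .
    qed
    have "integral\<^sup>S M g = c * integral\<^sup>S M h" using gh hs by simp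
    also have "\<dots> \<le> c * (SUP g \<in> {g. simple_function M g \<and> g \<le> f}. integral\<^sup>S M g)"
      by (intro mult_left_mono SUP_upper) (use hs hf in auto)
    finally show "integral\<^sup>S M g \<le> c * (SUP g \<in> {g. simple_function M g \<and> g \<le> f}. integral\<^sup>S M g)" .
  qed
qed

lemma ci_mono:
  assumes "\<And>t. g t \<le> h t"
  shows "circle_integral g \<le> circle_integral h"
proof -
  have 1: "(\<integral>\<^sup>+ t. e2ennreal (g t) * indicator {0..2*pi} t \<partial>lborel)
        \<le> (\<integral>\<^sup>+ t. e2ennreal (h t) * indicator {0..2*pi} t \<partial>lborel)"
    by (intro nn_integral_mono mult_right_mono e2ennreal_mono assms) simp
  have 2: "(\<integral>\<^sup>+ t. e2ennreal (- h t) * indicator {0..2*pi} t \<partial>lborel)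
        \<le> (\<integral>\<^sup>+ t. e2ennreal (- g t) * indicator {0..2*pi} t \<partial>lborel)"
    by (intro nn_integral_mono mult_right_mono e2ennreal_mono) (use assms in auto)
  show ?thesis unfolding circle_integral_def
    by (intro ereal_minus_mono) (use 1 2 less_eq_ennreal.rep_eq in auto)
qed

lemma pshD:
  assumes "psh U u"
  shows "open U" "usc_on U u" "\<And>x. x \<in> U \<Longrightarrow> u x < \<infinity>"
    "\<And>a b. \<forall>\<zeta>. cmod \<zeta> \<le> 1 \<longrightarrow> a + \<zeta> *s b \<in> U \<Longrightarrow>
        u a \<le> ereal (1 / (2*pi)) * circle_integral (\<lambda>t. u (a + cis t *s b))"
    "\<And>x. x \<in> U \<Longrightarrow> \<exists>y\<in>connected_component_set U x. u y \<noteq> -\<infinity>"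
  using assms unfolding psh_def by blast+

lemma pshI:
  assumes "open U" "usc_on U u" "\<And>x. x \<in> U \<Longrightarrow> u x < \<infinity>"
    "\<And>a b. \<forall>\<zeta>. cmod \<zeta> \<le> 1 \<longrightarrow> a + \<zeta> *s b \<in> U \<Longrightarrow>
        u a \<le> ereal (1 / (2*pi)) * circle_integral (\<lambda>t. u (a + cis t *s b))"
    "\<And>x. x \<in> U \<Longrightarrow> \<exists>y\<in>connected_component_set U x. u y \<noteq> -\<infinity>"
  shows "psh U u"
  unfolding psh_def using assms by blast

lemma uscD:
  assumes "usc_on U u" "x \<in> U" "u x < c"
  shows "\<exists>e>0. \<forall>y\<in>U. dist y x < e \<longrightarrow> u y < c"
  using assms unfolding usc_on_def by blast

lemma psh_max:
  assumes "psh_neg D \<phi>" "psh_neg D \<Phi>"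
  shows "psh_neg D (\<lambda>x. max (\<phi> x) (\<Phi> x))"
proof -
  have A: "psh D \<phi>" "psh D \<Phi>" "\<forall>x\<in>D. \<phi> x < 0" "\<forall>x\<in>D. \<Phi> x < 0"
    using assms unfolding psh_neg_def by auto
  have usc: "usc_on D (\<lambda>x. max (\<phi> x) (\<Phi> x))"
    unfolding usc_on_def
  proof (intro ballI allI impI)
    fix x c assume x: "x \<in> D" and "max (\<phi> x) (\<Phi> x) < c"
    hence "\<phi> x < c" "\<Phi> x < c" by auto
    then obtain e1 e2 where "e1 > 0" "\<forall>y\<in>D. dist y x < e1 \<longrightarrow> \<phi> y < c"
      "e2 > 0" "\<forall>y\<in>D. dist y x < e2 \<longrightarrow> \<Phi> y < c"
      using uscD[OF pshD(2)[OF A(1)] x] uscD[OF pshD(2)[OF A(2)] x] by blast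
    thus "\<exists>e>0. \<forall>y\<in>D. dist y x < e \<longrightarrow> max (\<phi> y) (\<Phi> y) < c"
      by (intro exI[of _ "min e1 e2"]) auto
  qed
  have mv: "max (\<phi> a) (\<Phi> a) \<le> ereal (1 / (2*pi)) *
      circle_integral (\<lambda>t. max (\<phi> (a + cis t *s b)) (\<Phi> (a + cis t *s b)))"
    if "\<forall>\<zeta>. cmod \<zeta> \<le> 1 \<longrightarrow> a + \<zeta> *s b \<in> D" for a b
  proof -
    have c: "0 \<le> ereal (1 / (2*pi))" by simp
    have "\<phi> a \<le> ereal (1 / (2*pi)) * circle_integral (\<lambda>t. \<phi> (a + cis t *s b))"
      by (rule pshD(4)[OF A(1) that])
    also have "\<dots> \<le> ereal (1 / (2*pi)) *
      circle_integral (\<lambda>t. max (\<phi> (a + cis t *s b)) (\<Phi> (a + cis t *s b)))"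
      by (intro ereal_mult_left_mono ci_mono c) auto
    finally have 1: "\<phi> a \<le> \<dots>" .
    have "\<Phi> a \<le> ereal (1 / (2*pi)) * circle_integral (\<lambda>t. \<Phi> (a + cis t *s b))"
      by (rule pshD(4)[OF A(2) that])
    also have "\<dots> \<le> ereal (1 / (2*pi)) *
      circle_integral (\<lambda>t. max (\<phi> (a + cis t *s b)) (\<Phi> (a + cis t *s b)))"
      by (intro ereal_mult_left_mono ci_mono c) auto
    finally have 2: "\<Phi> a \<le> \<dots>" .
    show ?thesis using 1 2 by simp
  qed
  have cc: "\<exists>y\<in>connected_component_set D x. max (\<phi> y) (\<Phi> y) \<noteq> -\<infinity>" if xD: "x \<in> D" for x
  proof -
    obtain y where "y\<in>connected_component_set D x" "\<Phi> y \<noteq> -\<infinity>"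
      using pshD(5)[OF A(2) xD] by blast
    moreover have "\<Phi> y \<le> max (\<phi> y) (\<Phi> y)" by simp
    ultimately show ?thesis
      by (metis ereal_infty_less_eq(2) order_trans)
  qed
  have lt: "max (\<phi> x) (\<Phi> x) < 0" if "x \<in> D" for x using A(3,4) that by auto
  have lt2: "max (\<phi> x) (\<Phi> x) < \<infinity>" if "x \<in> D" for x
    using lt[OF that] by (metis ereal_less_PInfty less_trans zero_ereal_def)
  have "psh D (\<lambda>x. max (\<phi> x) (\<Phi> x))"
    by (rule pshI[OF pshD(1)[OF A(1)] usc lt2 mv cc])
  thus ?thesis unfolding psh_neg_def using lt by blast
qed

lemma eexp_bound:
  fixes a b :: ereal and C :: real
  assumes "b \<le> a + ereal C"
  shows "eexp (- 2 * a) \<le> ennreal (exp (2 * C)) * eexp (- 2 * b)"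
proof (cases a)
  case (real r)
  show ?thesis
  proof (cases b)
    case (real s)
    with \<open>a = ereal r\<close> assms have "s \<le> r + C" by simp
    hence "exp (- 2 * r) \<le> exp (2 * C) * exp (- 2 * s)"
      by (simp add: exp_add[symmetric])
    thus ?thesis using \<open>a = ereal r\<close> real
      by (simp add: eexp_def ennreal_mult[symmetric] ennreal_leI)
  next
    case PInf with \<open>a = ereal r\<close> assms show ?thesis by simp
  next
    case MInf thus ?thesis by (simp add: eexp_def)
  qed
next
  case PInf thus ?thesis by (simp add: eexp_def)
next
  case MInf with assms have "b = -\<infinity>" by simp
  with MInf show ?thesis by (simp add: eexp_def)
qed

theorem corollary1p8:
  fixes D :: "(complex ^ 'n) set"
    and p :: nat and z :: "nat \<Rightarrow> complex ^ 'n" and m :: "nat \<Rightarrow> nat"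
    and f :: "nat \<Rightarrow> nat \<Rightarrow> complex ^ 'n \<Rightarrow> complex"
    and u :: "nat \<Rightarrow> complex ^ 'n \<Rightarrow> ereal" and U :: "nat \<Rightarrow> (complex ^ 'n) set"
    and \<Phi> :: "complex ^ 'n \<Rightarrow> ereal"
  assumes "hyperconvex D"
    and "apriori_data D p z m f u U"
    and "global_zhou_weight D p z m f u \<Phi>"
    and "w \<in> D"
  shows "\<Phi> w = Sup {\<phi> w | \<phi>. psh_neg D \<phi> \<and>
           (\<forall>i<p. \<not> loc_int (z i)
                    (\<lambda>x. ennreal (sqnorm (m i) (f i) x) * eexp (- 2 * (u i x + \<phi> x))) \<and>
                  (\<exists>C::real. \<exists>r>0. \<forall>x\<in>ball (z i) r \<inter> D. \<phi> x \<ge> \<Phi> x - ereal C))}"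
    (is "_ = Sup ?S")
proof (rule antisym)
  have Z: "psh_neg D \<Phi>"
    "\<forall>i<p. \<not> loc_int (z i) (\<lambda>x. ennreal (sqnorm (m i) (f i) x) * eexp (- 2 * (u i x + \<Phi> x)))"
    "\<forall>\<Psi>. psh_neg D \<Psi> \<and> (\<forall>w\<in>D. \<Psi> w \<ge> \<Phi> w) \<and>
        (\<forall>i<p. \<not> loc_int (z i) (\<lambda>w. ennreal (sqnorm (m i) (f i) w) * eexp (- 2 * (u i w + \<Psi> w))))
        \<longrightarrow> (\<forall>w\<in>D. \<Psi> w = \<Phi> w)"
    using assms(3) unfolding global_zhou_weight_def by auto
  have bd0: "\<exists>C::real. \<exists>r>0. \<forall>x\<in>ball (z i) r \<inter> D. \<Phi> x \<ge> \<Phi> x - ereal C" for i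
    by (rule exI[of _ 0], rule exI[of _ 1]) simp
  have "\<Phi> w \<in> ?S"
    using Z(1,2) bd0 by blast
  thus "\<Phi> w \<le> Sup ?S" by (rule Sup_upper)
  show "Sup ?S \<le> \<Phi> w"
  proof (rule Sup_least)
    fix y assume "y \<in> ?S"
    then obtain \<phi> where y: "y = \<phi> w" and ph: "psh_neg D \<phi>"
      and ni: "\<forall>i<p. \<not> loc_int (z i)
                    (\<lambda>x. ennreal (sqnorm (m i) (f i) x) * eexp (- 2 * (u i x + \<phi> x)))"
      and bd: "\<forall>i<p. \<exists>C::real. \<exists>r>0. \<forall>x\<in>ball (z i) r \<inter> D. \<phi> x \<ge> \<Phi> x - ereal C"
      by blast
    define \<Psi> where "\<Psi> = (\<lambda>x. max (\<phi> x) (\<Phi> x))"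
    have pP: "psh_neg D \<Psi>" unfolding \<Psi>_def by (rule psh_max[OF ph Z(1)])
    have oD: "open D" using Z(1) unfolding psh_neg_def psh_def by auto
    have niP: "\<not> loc_int (z i) (\<lambda>x. ennreal (sqnorm (m i) (f i) x) * eexp (- 2 * (u i x + \<Psi> x)))"
      if i: "i < p" for i
    proof
      assume "loc_int (z i) (\<lambda>x. ennreal (sqnorm (m i) (f i) x) * eexp (- 2 * (u i x + \<Psi> x)))"
      then obtain r where r: "r > 0" and fin:
        "(\<integral>\<^sup>+ x. ennreal (sqnorm (m i) (f i) x) * eexp (- 2 * (u i x + \<Psi> x)) * indicator (ball (z i) r) x \<partial>lborel) < \<infinity>"
        unfolding loc_int_def by blast
      obtain C0 r0 where r0: "r0 > 0" and C0: "\<forall>x\<in>ball (z i) r0 \<inter> D. \<phi> x \<ge> \<Phi> x - ereal C0"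
        using bd i by blast
      have ziD: "z i \<in> D" using assms(2) i unfolding apriori_data_def by auto
      obtain rD where rD: "rD > 0" "ball (z i) rD \<subseteq> D"
        using oD ziD open_contains_ball by blast
      define C where "C = max C0 0"
      define s where "s = min r (min r0 rD)"
      have s: "s > 0" using r r0 rD by (simp add: s_def)
      have pw: "ennreal (sqnorm (m i) (f i) x) * eexp (- 2 * (u i x + \<phi> x)) * indicator (ball (z i) s) x
          \<le> ennreal (exp (2*C)) * (ennreal (sqnorm (m i) (f i) x) * eexp (- 2 * (u i x + \<Psi> x)) * indicator (ball (z i) r) x)"
        for x
      proof (cases "x \<in> ball (z i) s")
        case True
        hence xD: "x \<in> D" "x \<in> ball (z i) r0" "x \<in> ball (z i) r" using rD
          by (auto simp: s_def)
        have "\<Phi> x - ereal C0 \<le> \<phi> x" using C0 xD by auto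
        hence "\<Phi> x \<le> \<phi> x + ereal C0"
          by (simp add: ereal_minus_le_iff)
        also have "\<dots> \<le> \<phi> x + ereal C" by (intro add_left_mono) (simp add: C_def)
        finally have a1: "\<Phi> x \<le> \<phi> x + ereal C" .
        have "0 \<le> C" by (simp add: C_def)
        hence "(0::ereal) \<le> ereal C" by simp
        hence a2: "\<phi> x \<le> \<phi> x + ereal C" by (rule add_increasing2) simp
        have "\<Psi> x \<le> \<phi> x + ereal C" unfolding \<Psi>_def using a1 a2 by simp
        hence "u i x + \<Psi> x \<le> u i x + (\<phi> x + ereal C)" by (rule add_left_mono)
        hence "u i x + \<Psi> x \<le> (u i x + \<phi> x) + ereal C" by (simp add: add.assoc)
        from eexp_bound[OF this] have
          "eexp (- 2 * (u i x + \<phi> x)) \<le> ennreal (exp (2 * C)) * eexp (- 2 * (u i x + \<Psi> x))" .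
        hence "ennreal (sqnorm (m i) (f i) x) * eexp (- 2 * (u i x + \<phi> x))
          \<le> ennreal (sqnorm (m i) (f i) x) * (ennreal (exp (2 * C)) * eexp (- 2 * (u i x + \<Psi> x)))"
          by (rule mult_left_mono) simp
        thus ?thesis using True xD by (simp add: mult_ac)
      qed simp
      have "(\<integral>\<^sup>+ x. ennreal (sqnorm (m i) (f i) x) * eexp (- 2 * (u i x + \<phi> x)) * indicator (ball (z i) s) x \<partial>lborel)
          \<le> (\<integral>\<^sup>+ x. ennreal (exp (2*C)) * (ennreal (sqnorm (m i) (f i) x) * eexp (- 2 * (u i x + \<Psi> x)) * indicator (ball (z i) r) x) \<partial>lborel)"
        by (intro nn_integral_mono pw)
      also have "\<dots> \<le> ennreal (exp (2*C)) * (\<integral>\<^sup>+ x. ennreal (sqnorm (m i) (f i) x) * eexp (- 2 * (u i x + \<Psi> x)) * indicator (ball (z i) r) x \<partial>lborel)"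
        by (rule nn_cmult_le) simp
      also have "\<dots> < \<infinity>" using fin by (simp add: ennreal_mult_less_top)
      finally have "loc_int (z i) (\<lambda>x. ennreal (sqnorm (m i) (f i) x) * eexp (- 2 * (u i x + \<phi> x)))"
        unfolding loc_int_def using s by blast
      thus False using ni i by blast
    qed
    have "\<forall>x\<in>D. \<Psi> x = \<Phi> x"
      using Z(3) pP niP by (auto simp: \<Psi>_def)
    thus "y \<le> \<Phi> w" using assms(4) y by (metis \<Psi>_def max.cobounded1)
  qed
qed

end
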